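(* For $W>0$ let $X_W\sim\operatorname{IG}(W^{-1},1)$. Then $E[X_W^\alpha]\le W^{-\alpha}$ for $\alpha\in[0,1]$; and for $\alpha\in[0,\frac12)$, $E[X_W^\alpha]\le C_\alpha$ and $\lim_{W\downarrow0}E[X_W^\alpha]=C_\alpha$, where $C_\alpha:=2^{-\alpha}\Gamma(\frac12-\alpha)/\sqrt\pi$.
   Context: $\operatorname{IG}(\mu,\lambda)$, $\mu,\lambda>0$, denotes the inverse Gaussian distribution with density $f(x)=\sqrt{\frac{\lambda}{2\pi x^3}}\exp\big(-\frac{\lambda(x-\mu)^2}{2\mu^2x}\big)$, $x>0$. *)

theory Defs
  imports "HOL-Analysis.Analysis"
begin

definition ig_density :: "real \<Rightarrow> real \<Rightarrow> real \<Rightarrow> real" where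
  "ig_density mu lam x =
     (if x > 0 then sqrt (lam / (2 * pi * x ^ 3)) * exp (- (lam * (x - mu)\<^sup>2) / (2 * mu\<^sup>2 * x))
      else 0)"

definition IG :: "real \<Rightarrow> real \<Rightarrow> real measure" where
  "IG mu lam = density lborel (\<lambda>x. ennreal (ig_density mu lam x))"

definition C_const :: "real \<Rightarrow> real" where
  "C_const \<alpha> = 2 powr (- \<alpha>) * Gamma (1/2 - \<alpha>) / sqrt pi"

end

theory Submission
  imports Defs "HOL-Probability.Probability"
begin

definition lev :: "real \<Rightarrow> real" where
  "lev x = exp (- 1 / (2 * x)) / (sqrt (2 * pi) * x * sqrt x)"

lemma ig_pos:
  assumes "W > 0" "x > 0"
  shows "ig_density (1/W) 1 x = exp (W - W\<^sup>2 * x / 2) * lev x"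
proof -
  have e: "- (1 * (x - 1 / W)\<^sup>2) / (2 * (1 / W)\<^sup>2 * x) = W - W\<^sup>2 * x / 2 + (- 1 / (2 * x))"
    using assms by (simp add: field_simps power2_eq_square)
  have s: "sqrt (1 / (2 * pi * x ^ 3)) = 1 / (sqrt (2 * pi) * x * sqrt x)"
    using assms by (simp add: real_sqrt_mult real_sqrt_divide power3_eq_cube)
  show ?thesis using assms unfolding ig_density_def lev_def e s exp_add
    by simp
qed

lemma ig_meas[measurable]: "ig_density m l \<in> borel_measurable borel"
  unfolding ig_density_def by measurable

lemma ig_nonneg: "ig_density m 1 x \<ge> 0"
  by (simp add: ig_density_def)

lemma ig_nonpos: "x \<le> 0 \<Longrightarrow> ig_density m l x = 0"
  by (simp add: ig_density_def)

lemma lev_pos: "x > 0 \<Longrightarrow> lev x > 0"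
  by (simp add: lev_def)

lemma abs_int_cong:
  assumes "\<And>x. x \<in> S \<Longrightarrow> f x = g x"
  shows "(f absolutely_integrable_on S \<and> integral S f = b) \<longleftrightarrow> (g absolutely_integrable_on S \<and> integral S g = b)"
  using assms set_integrable_cong[of lebesgue lebesgue S S f g] integral_cong[of S f g] by auto

lemma gauss_UNIV:
  "(\<lambda>t::real. exp (- t\<^sup>2 / 2)) absolutely_integrable_on UNIV \<and> integral UNIV (\<lambda>t::real. exp (- t\<^sup>2 / 2)) = sqrt (2 * pi)"
proof -
  have h: "has_bochner_integral lborel std_normal_density 1"
    using std_normal_moment_even[of 0] by simp
  have eq: "(\<lambda>t::real. exp (- t\<^sup>2 / 2)) = (\<lambda>t. sqrt (2 * pi) * std_normal_density t)"
    by (auto simp: std_normal_density_def)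
  have hb: "has_bochner_integral lborel (\<lambda>t::real. exp (- t\<^sup>2 / 2)) (sqrt (2 * pi))"
    unfolding eq using has_bochner_integral_mult_right[OF h, of "sqrt (2*pi)"] by simp
  have i: "integrable lborel (\<lambda>t::real. exp (- t\<^sup>2 / 2))"
    using hb by (simp add: has_bochner_integral_iff)
  have "integrable lebesgue (\<lambda>t::real. exp (- t\<^sup>2 / 2))"
    using i by (subst integrable_completion) auto
  then have a: "(\<lambda>t::real. exp (- t\<^sup>2 / 2)) absolutely_integrable_on UNIV"
    by (simp add: set_integrable_def)
  show ?thesis using a integral_lborel[OF i] hb by (simp add: has_bochner_integral_iff)
qed

lemma der_g:
  assumes x: "x > 0"
  shows "((\<lambda>x. 1 / sqrt x - W * sqrt x) has_field_derivative (- (1 / (2 * x * sqrt x) + W / (2 * sqrt x)))) (at x)"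
proof -
  have s: "(sqrt has_field_derivative (inverse (sqrt x) / 2)) (at x)" using DERIV_real_sqrt x by blast
  have a: "((\<lambda>x. inverse (sqrt x)) has_field_derivative (- ((inverse (sqrt x) / 2) * inverse (sqrt x ^ Suc (Suc 0))))) (at x)"
    using DERIV_inverse_fun[OF s] x by auto
  have b: "((\<lambda>x. W * sqrt x) has_field_derivative W * (inverse (sqrt x) / 2)) (at x)"
    using DERIV_cmult[OF s] by simp
  have "((\<lambda>x. inverse (sqrt x) - W * sqrt x) has_field_derivative (- ((inverse (sqrt x) / 2) * inverse (sqrt x ^ Suc (Suc 0)))) - W * (inverse (sqrt x) / 2)) (at x)"
    using DERIV_diff[OF a b] .
  moreover have "(- ((inverse (sqrt x) / 2) * inverse (sqrt x ^ Suc (Suc 0)))) - W * (inverse (sqrt x) / 2) = - (1 / (2 * x * sqrt x) + W / (2 * sqrt x))"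
  proof -
    have "sqrt x ^ Suc (Suc 0) = x" using x by (simp add: numeral_2_eq_2[symmetric])
    then show ?thesis using x by (simp add: divide_simps)
  qed
  ultimately show ?thesis by (simp add: inverse_eq_divide)
qed

lemma cov_gauss:
  fixes W :: real
  assumes W: "W > 0"
  shows "(\<lambda>x. (1 + W * x) * ig_density (1/W) 1 x) absolutely_integrable_on {0<..}
     \<and> integral {0<..} (\<lambda>x. (1 + W * x) * ig_density (1/W) 1 x) = 2"
proof -
  define g where "g x = 1 / sqrt x - W * sqrt x" for x :: real
  define g' where "g' x = - (1 / (2 * x * sqrt x) + W / (2 * sqrt x))" for x :: real
  have der: "(g has_field_derivative g' x) (at x within {0<..})" if "x \<in> {0<..}" for x
    unfolding g_def g'_def using der_g[of x W] that by (auto intro: has_field_derivative_at_within)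
  have mono: "g y < g x" if "0 < x" "x < y" for x y
  proof -
    have "sqrt x < sqrt y" using that by simp
    moreover have "1 / sqrt y < 1 / sqrt x" using that by (simp add: divide_strict_left_mono)
    moreover have "W * sqrt x < W * sqrt y" using W \<open>sqrt x < sqrt y\<close> by simp
    ultimately show ?thesis unfolding g_def by linarith
  qed
  have inj: "inj_on g {0<..}"
    by (rule linorder_inj_onI) (use mono in \<open>auto dest: less_imp_neq[symmetric]\<close>)
  have img: "g ` {0<..} = UNIV"
  proof (intro set_eqI iffI)
    fix t :: real
    define R where "R = sqrt (t\<^sup>2 + 4 * W)"
    have R2: "R\<^sup>2 = t\<^sup>2 + 4 * W" unfolding R_def using W by simp
    have "sqrt (t\<^sup>2) < R" unfolding R_def using W real_sqrt_less_mono[of "t\<^sup>2" "t\<^sup>2 + 4 * W"] by simp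
    then have Rt: "R > \<bar>t\<bar>" by simp
    have tR: "t + R > 0" using Rt by linarith
    define s where "s = 2 / (t + R)"
    have s: "s > 0" unfolding s_def using tR by simp
    have "g (s\<^sup>2) = t"
    proof -
      have "g (s\<^sup>2) = 1 / s - W * s" unfolding g_def using s by simp
      also have "\<dots> = ((t + R)\<^sup>2 - 4 * W) / (2 * (t + R))" unfolding s_def using tR
        by (simp add: divide_simps) (simp add: algebra_simps power2_eq_square)
      also have "\<dots> = t" using tR R2 by (simp add: divide_simps) (simp add: algebra_simps power2_eq_square)
      finally show ?thesis .
    qed
    then show "t \<in> g ` {0<..}" using s by (intro image_eqI[of _ _ "s\<^sup>2"]) auto
  qed auto
  have L: "{0::real<..} \<in> sets lebesgue" by simp
  note cv = has_absolute_integral_change_of_variables_1'[of "{0<..}" g g' "\<lambda>t. exp (- t\<^sup>2 / 2)" "sqrt (2*pi)", OF _ der inj]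
  have c1: "(\<lambda>x. \<bar>g' x\<bar> * exp (- (g x)\<^sup>2 / 2)) absolutely_integrable_on {0<..} \<and>
      integral {0<..} (\<lambda>x. \<bar>g' x\<bar> * exp (- (g x)\<^sup>2 / 2)) = sqrt (2 * pi)"
    apply (rule iffD2[OF cv[OF L]]) apply blast apply (unfold img) apply (rule gauss_UNIV) done
  have eqp: "\<bar>g' x\<bar> * exp (- (g x)\<^sup>2 / 2) = sqrt (2 * pi) / 2 * ((1 + W * x) * ig_density (1/W) 1 x)"
    if "x \<in> {0<..}" for x
  proof -
    have x: "x > 0" using that by simp
    have ag: "\<bar>g' x\<bar> = (1 + W * x) / (2 * x * sqrt x)"
      unfolding g'_def using x W by (simp add: divide_simps)
    have gg: "- (g x)\<^sup>2 / 2 = W - W\<^sup>2 * x / 2 + (- 1 / (2 * x))"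
    proof -
      have "g x = (1 - W * x) / sqrt x" unfolding g_def using x
        by (simp add: field_simps)
      then have "(g x)\<^sup>2 = (1 - W * x)\<^sup>2 / x" using x by (simp add: power_divide)
      also have "\<dots> = 1 / x - 2 * W + W\<^sup>2 * x" using x
        by (simp add: field_simps power2_eq_square)
      finally have "(g x)\<^sup>2 = 1 / x - 2 * W + W\<^sup>2 * x" .
      then show ?thesis using x by (simp add: field_simps)
    qed
    show ?thesis unfolding ag gg exp_add ig_pos[OF W x] lev_def using x
      by (simp add: field_simps)
  qed
  have c2: "(\<lambda>x. sqrt (2 * pi) / 2 * ((1 + W * x) * ig_density (1/W) 1 x)) absolutely_integrable_on {0<..} \<and>
      integral {0<..} (\<lambda>x. sqrt (2 * pi) / 2 * ((1 + W * x) * ig_density (1/W) 1 x)) = sqrt (2 * pi)"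
    using iffD1[OF abs_int_cong[OF eqp] c1] .
  have a: "(\<lambda>x. (1 + W * x) * ig_density (1/W) 1 x) absolutely_integrable_on {0<..}"
    using c2 set_integrable_mult_right_iff[of "sqrt (2 * pi) / 2" lebesgue "{0<..}"] by simp
  moreover have "integral {0<..} (\<lambda>x. (1 + W * x) * ig_density (1/W) 1 x) = 2"
    using c2 integral_mult_right[of "{0<..}" "sqrt (2 * pi) / 2"] by simp
  ultimately show ?thesis by simp
qed

lemma borel_lebesgue_on: "(f::real\<Rightarrow>real) \<in> borel_measurable borel \<Longrightarrow> f \<in> borel_measurable (lebesgue_on S)"
  by (simp add: measurable_completion measurable_restrict_space1)

lemma inv_alg:
  fixes W y A B C D p s :: real
  assumes W: "W > 0" and y: "y > 0" and ee: "A * B = C * D" and p: "p > 0" and s: "s > 0" "s * s = y"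
  shows "\<bar>- 1 / (W\<^sup>2 * y\<^sup>2)\<bar> * (1 / (W\<^sup>2 * y) * (A * (B / (p * (1 / (W\<^sup>2 * y)) * (1 / (W * s)))))) = C * (D / (p * y * s)) / W"
proof -
  have "\<bar>- 1 / (W\<^sup>2 * y\<^sup>2)\<bar> = 1 / (W\<^sup>2 * y\<^sup>2)" using W y by simp
  then show ?thesis using W y p s ee[symmetric] by (simp add: field_simps power2_eq_square)
qed

lemma inv_pt:
  fixes W y :: real
  assumes W: "W > 0" and y: "y > 0"
  shows "\<bar>- 1 / (W\<^sup>2 * y\<^sup>2)\<bar> * (1 / (W\<^sup>2 * y) * ig_density (1/W) 1 (1 / (W\<^sup>2 * y))) = ig_density (1/W) 1 y / W"
proof -
  have p: "1 / (W\<^sup>2 * y) > 0" using W y by simp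
  have sq: "sqrt (1 / (W\<^sup>2 * y)) = 1 / (W * sqrt y)"
    using W y by (simp add: real_sqrt_divide real_sqrt_mult)
  have e1: "W - W\<^sup>2 * (1 / (W\<^sup>2 * y)) / 2 = W + (- 1 / (2 * y))" using W y by (simp add: field_simps)
  have e2: "- 1 / (2 * (1 / (W\<^sup>2 * y))) = - (W\<^sup>2 * y / 2)" using W y by (simp add: field_simps)
  have ee: "exp (W + (- 1 / (2 * y))) * exp (- (W\<^sup>2 * y / 2)) = exp (W - W\<^sup>2 * y / 2) * exp (- 1 / (2 * y))"
    by (simp add: mult_exp_exp algebra_simps)
  show ?thesis
    unfolding ig_pos[OF W p] ig_pos[OF W y] lev_def sq e1 e2
    by (rule inv_alg[OF W y ee]) (use y in auto)
qed

lemma cov_inv: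
  fixes W b :: real
  assumes W: "W > 0"
  shows "((\<lambda>x. x * ig_density (1/W) 1 x) absolutely_integrable_on {0<..} \<and> integral {0<..} (\<lambda>x. x * ig_density (1/W) 1 x) = b)
    \<longleftrightarrow> ((\<lambda>y. ig_density (1/W) 1 y / W) absolutely_integrable_on {0<..} \<and> integral {0<..} (\<lambda>y. ig_density (1/W) 1 y / W) = b)"
proof -
  define g where "g y = 1 / (W\<^sup>2 * y)" for y :: real
  define g' where "g' y = - 1 / (W\<^sup>2 * y\<^sup>2)" for y :: real
  have der: "(g has_field_derivative g' y) (at y within {0<..})" if "y \<in> {0<..}" for y
  proof -
    have y: "y > 0" using that by simp
    have d1: "((\<lambda>y. W\<^sup>2 * y) has_field_derivative W\<^sup>2 * 1) (at y)"
      by (intro DERIV_cmult DERIV_ident)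
    have "((\<lambda>y. inverse (W\<^sup>2 * y)) has_field_derivative - (W\<^sup>2 * 1 * inverse ((W\<^sup>2 * y) ^ Suc (Suc 0)))) (at y)"
      using DERIV_inverse_fun[OF d1] W y by simp
    moreover have "- (W\<^sup>2 * 1 * inverse ((W\<^sup>2 * y) ^ Suc (Suc 0))) = g' y"
      unfolding g'_def using W y by (simp add: field_simps power2_eq_square)
    ultimately have "(g has_field_derivative g' y) (at y)"
      unfolding g_def by (simp add: inverse_eq_divide)
    then show ?thesis by (rule has_field_derivative_at_within)
  qed
  have inj: "inj_on g {0<..}"
    unfolding inj_on_def g_def using W by (auto simp: field_simps)
  have img: "g ` {0<..} = {0<..}"
  proof (intro set_eqI iffI)
    fix x :: real assume "x \<in> g ` {0<..}" then show "x \<in> {0<..}" unfolding g_def using W by auto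
  next
    fix x :: real assume x: "x \<in> {0<..}"
    then have "g (1 / (W\<^sup>2 * x)) = x" unfolding g_def using W by simp
    moreover have "1 / (W\<^sup>2 * x) \<in> {0<..}" using W x by simp
    ultimately show "x \<in> g ` {0<..}" by (metis image_eqI)
  qed
  have L: "{0::real<..} \<in> sets lebesgue" by simp
  note cv = has_absolute_integral_change_of_variables_1'[of "{0<..}" g g' "\<lambda>x. x * ig_density (1/W) 1 x" b, OF L der inj]
  have eqp: "\<bar>g' y\<bar> * (g y * ig_density (1/W) 1 (g y)) = ig_density (1/W) 1 y / W" if "y \<in> {0<..}" for y
    unfolding g_def g'_def using inv_pt[OF W, of y] that by simp
  show ?thesis
  proof -
    have c: "((\<lambda>x. \<bar>g' x\<bar> * (g x * ig_density (1/W) 1 (g x))) absolutely_integrable_on {0<..} \<and>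
       integral {0<..} (\<lambda>x. \<bar>g' x\<bar> * (g x * ig_density (1/W) 1 (g x))) = b) \<longleftrightarrow>
       ((\<lambda>x. x * ig_density (1/W) 1 x) absolutely_integrable_on {0<..} \<and> integral {0<..} (\<lambda>x. x * ig_density (1/W) 1 x) = b)"
      using cv by (simp only: img)
    note d = abs_int_cong[where b=b, OF eqp]
    show ?thesis using trans[OF c[symmetric] d] .
  qed
qed

lemma abs_int_imp_int: "f absolutely_integrable_on S \<Longrightarrow> (f::real\<Rightarrow>real) integrable_on S"
  using set_lebesgue_integral_eq_integral(1) by blast

lemma ig_norm:
  fixes W :: real
  assumes W: "W > 0"
  shows "(\<lambda>x. ig_density (1/W) 1 x) absolutely_integrable_on {0<..} \<and> integral {0<..} (\<lambda>x. ig_density (1/W) 1 x) = 1"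
    and "(\<lambda>x. x * ig_density (1/W) 1 x) absolutely_integrable_on {0<..} \<and> integral {0<..} (\<lambda>x. x * ig_density (1/W) 1 x) = 1 / W"
proof -
  let ?ig = "\<lambda>x. ig_density (1/W) 1 x"
  have A: "(\<lambda>x. (1 + W * x) * ?ig x) absolutely_integrable_on {0<..}"
     "integral {0<..} (\<lambda>x. (1 + W * x) * ?ig x) = 2"
    using cov_gauss[OF W] by auto
  have a0: "?ig absolutely_integrable_on {0<..}"
  proof (rule measurable_bounded_by_integrable_imp_absolutely_integrable)
    show "?ig \<in> borel_measurable (lebesgue_on {0<..})" by (rule borel_lebesgue_on) simp
    show "{0::real<..} \<in> sets lebesgue" by simp
    show "(\<lambda>x. (1 + W * x) * ?ig x) integrable_on {0<..}" using abs_int_imp_int[OF A(1)] .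
    show "norm (?ig x) \<le> (1 + W * x) * ?ig x" if "x \<in> {0<..}" for x
    proof -
      have "0 \<le> ?ig x" by (simp add: ig_density_def)
      moreover have "0 \<le> W * x * ?ig x" using W that \<open>0 \<le> ?ig x\<close> by simp
      ultimately show ?thesis by (simp add: algebra_simps)
    qed
  qed
  define I0 where "I0 = integral {0<..} ?ig"
  have r: "(\<lambda>y. ?ig y / W) absolutely_integrable_on {0<..} \<and> integral {0<..} (\<lambda>y. ?ig y / W) = I0 / W"
  proof
    show "(\<lambda>y. ?ig y / W) absolutely_integrable_on {0<..}"
      using a0 W set_integrable_mult_divide_iff[of W lebesgue "{0<..}" ?ig] by simp
    show "integral {0<..} (\<lambda>y. ?ig y / W) = I0 / W"
      unfolding I0_def divide_inverse by (rule integral_mult_left)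
  qed
  have a1: "(\<lambda>x. x * ?ig x) absolutely_integrable_on {0<..}" "integral {0<..} (\<lambda>x. x * ?ig x) = I0 / W"
    using iffD2[OF cov_inv[OF W] r] by auto
  have "integral {0<..} (\<lambda>x. (1 + W * x) * ?ig x) = integral {0<..} (\<lambda>x. ?ig x + W * (x * ?ig x))"
    by (simp add: algebra_simps)
  also have "\<dots> = integral {0<..} ?ig + integral {0<..} (\<lambda>x. W * (x * ?ig x))"
    by (rule integral_add) (use abs_int_imp_int[OF a0] integrable_on_cmult_left[OF abs_int_imp_int[OF a1(1)], of W] in auto)
  also have "\<dots> = I0 + W * (I0 / W)" unfolding integral_mult_right a1(2) I0_def ..
  also have "\<dots> = 2 * I0" using W by simp
  finally have "I0 = 1" using A(2) by simp
  then show "?ig absolutely_integrable_on {0<..} \<and> integral {0<..} ?ig = 1"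
    using a0 I0_def by simp
  show "(\<lambda>x. x * ?ig x) absolutely_integrable_on {0<..} \<and> integral {0<..} (\<lambda>x. x * ?ig x) = 1 / W"
    using a1 \<open>I0 = 1\<close> by simp
qed

lemma IG_conv:
  fixes h :: "real \<Rightarrow> real"
  assumes W: "W > 0" and hm[measurable]: "h \<in> borel_measurable borel"
    and ai: "(\<lambda>x. ig_density (1/W) 1 x * h x) absolutely_integrable_on {0<..}"
  shows "integrable (IG (1/W) 1) h"
    "integral\<^sup>L (IG (1/W) 1) h = integral {0<..} (\<lambda>x. ig_density (1/W) 1 x * h x)"
proof -
  let ?ig = "\<lambda>x. ig_density (1/W) 1 x"
  have eq: "(\<lambda>x. ?ig x *\<^sub>R h x) = (\<lambda>x. indicator {0<..} x *\<^sub>R (?ig x * h x))"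
    by (auto simp: fun_eq_iff indicator_def ig_nonpos not_less)
  have il: "integrable lebesgue (\<lambda>x. indicator {0<..} x *\<^sub>R (?ig x * h x))"
    using ai by (simp add: set_integrable_def)
  have ib: "integrable lborel (\<lambda>x. indicator {0<..} x *\<^sub>R (?ig x * h x))"
    using il by (subst (asm) integrable_completion) auto
  have nn: "AE x in lborel. 0 \<le> ?ig x" by (simp add: ig_nonneg)
  show "integrable (IG (1/W) 1) h"
    unfolding IG_def using ib eq integrable_density[of h lborel ?ig] nn by simp
  have "integral\<^sup>L (IG (1/W) 1) h = integral\<^sup>L lborel (\<lambda>x. ?ig x *\<^sub>R h x)"
    unfolding IG_def by (rule integral_density) (auto simp: ig_nonneg)
  also have "\<dots> = integral\<^sup>L lborel (\<lambda>x. indicator {0<..} x *\<^sub>R (?ig x * h x))"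
    unfolding eq ..
  also have "\<dots> = integral\<^sup>L lebesgue (\<lambda>x. indicator {0<..} x *\<^sub>R (?ig x * h x))"
    by (rule integral_completion[symmetric]) simp
  also have "\<dots> = (LINT x:{0<..} | lebesgue. ?ig x * h x)"
    by (simp add: set_lebesgue_integral_def)
  also have "\<dots> = integral {0<..} (\<lambda>x. ?ig x * h x)"
    by (rule set_lebesgue_integral_eq_integral(2)[OF ai])
  finally show "integral\<^sup>L (IG (1/W) 1) h = integral {0<..} (\<lambda>x. ig_density (1/W) 1 x * h x)" .
qed

lemma powr_le_lin:
  fixes y a :: real
  assumes y: "y > 0" and a: "0 \<le> a" "a \<le> 1"
  shows "y powr a \<le> 1 - a + a * y"
proof -
  have "exp ((1 - a) *\<^sub>R 0 + a *\<^sub>R ln y) \<le> (1 - a) * exp 0 + a * exp (ln y)"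
    by (rule convex_onD[OF exp_convex]) (use a in auto)
  then show ?thesis using y by (simp add: powr_def)
qed

lemma powr_le_1x:
  fixes x a :: real
  assumes x: "x > 0" and a: "0 \<le> a" "a \<le> 1"
  shows "x powr a \<le> 1 + x"
  using powr_le_lin[OF x a] a x by (smt (verit) mult_left_le_one_le)

lemma part1:
  fixes W a :: real
  assumes W: "W > 0" and a: "0 \<le> a" "a \<le> 1"
  shows "(\<lambda>x. ig_density (1/W) 1 x * x powr a) absolutely_integrable_on {0<..}"
    "integral {0<..} (\<lambda>x. ig_density (1/W) 1 x * x powr a) \<le> W powr (- a)"
proof -
  let ?ig = "\<lambda>x. ig_density (1/W) 1 x"
  note n0 = ig_norm(1)[OF W] and n1 = ig_norm(2)[OF W]
  have i0: "?ig integrable_on {0<..}" using abs_int_imp_int n0 by blast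
  have i1: "(\<lambda>x. x * ?ig x) integrable_on {0<..}" using abs_int_imp_int n1 by blast
  show ai: "(\<lambda>x. ?ig x * x powr a) absolutely_integrable_on {0<..}"
  proof (rule measurable_bounded_by_integrable_imp_absolutely_integrable)
    show "(\<lambda>x. ?ig x * x powr a) \<in> borel_measurable (lebesgue_on {0<..})" by (rule borel_lebesgue_on) simp
    show "{0::real<..} \<in> sets lebesgue" by simp
    show "(\<lambda>x. ?ig x + x * ?ig x) integrable_on {0<..}" using integrable_add[OF i0 i1] .
    show "norm (?ig x * x powr a) \<le> ?ig x + x * ?ig x" if "x \<in> {0<..}" for x
    proof -
      have x: "x > 0" using that by simp
      have "norm (?ig x * x powr a) = ?ig x * x powr a" using ig_nonneg by simp
      also have "\<dots> \<le> ?ig x * (1 + x)" using powr_le_1x[OF x a] ig_nonneg by (rule mult_left_mono)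
      finally show ?thesis by (simp add: algebra_simps)
    qed
  qed
  define c where "c = (1/W) powr a"
  have c: "c > 0" unfolding c_def using W by simp
  have pt: "?ig x * x powr a \<le> c * (1 - a) * ?ig x + c * a * W * (x * ?ig x)" if "x \<in> {0<..}" for x
  proof -
    have x: "x > 0" using that by simp
    have "x powr a = c * (W * x) powr a"
      unfolding c_def using W x by (simp add: powr_mult[symmetric])
    also have "\<dots> \<le> c * (1 - a + a * (W * x))"
      using powr_le_lin[of "W * x" a] W x a c by (simp add: mult_left_mono)
    finally have "x powr a \<le> c * (1 - a + a * (W * x))" .
    then have "?ig x * x powr a \<le> ?ig x * (c * (1 - a + a * (W * x)))"
      using ig_nonneg by (rule mult_left_mono)
    then show ?thesis by (simp add: algebra_simps)
  qed
  have "integral {0<..} (\<lambda>x. ?ig x * x powr a) \<le> integral {0<..} (\<lambda>x. c * (1 - a) * ?ig x + c * a * W * (x * ?ig x))"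
    by (rule integral_le[OF abs_int_imp_int[OF ai] _ pt])
       (intro integrable_add integrable_on_mult_right i0 i1)
  also have "\<dots> = c * (1 - a) * integral {0<..} ?ig + c * a * W * integral {0<..} (\<lambda>x. x * ?ig x)"
    by (subst integral_add) (intro integrable_on_mult_right i0 i1, intro integrable_on_mult_right i0 i1, simp add: integral_mult_right)
  also have "\<dots> = c" using n0 n1 W by (simp add: algebra_simps)
  also have "c = W powr (- a)" unfolding c_def using W by (simp add: powr_minus powr_divide inverse_eq_divide)
  finally show "integral {0<..} (\<lambda>x. ?ig x * x powr a) \<le> W powr (- a)" .
qed

lemma mono_pt:
  fixes W V a x :: real
  assumes V: "0 < V" "V < W" and a: "0 \<le> a" and x: "x > 0"
  shows "ig_density (1/W) 1 x * x powr a \<le> ig_density (1/V) 1 x * x powr a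
      + (2 / (W + V)) powr a * (ig_density (1/W) 1 x - ig_density (1/V) 1 x)"
proof -
  have W: "W > 0" using V by simp
  define c0 where "c0 = (2 / (W + V)) powr a"
  define d where "d = exp (W - W\<^sup>2 * x / 2) - exp (V - V\<^sup>2 * x / 2)"
  have key: "d * x powr a \<le> d * c0"
  proof (cases "x \<le> 2 / (W + V)")
    case True
    have "(W + V) * x \<le> 2" using True V by (simp add: field_simps)
    then have "V - V\<^sup>2 * x / 2 \<le> W - W\<^sup>2 * x / 2"
    proof -
      have "(W - W\<^sup>2 * x / 2) - (V - V\<^sup>2 * x / 2) = (W - V) * (1 - (W + V) * x / 2)"
        by (simp add: field_simps power2_eq_square)
      moreover have "(W - V) * (1 - (W + V) * x / 2) \<ge> 0"
        using \<open>(W + V) * x \<le> 2\<close> V by simp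
      ultimately show ?thesis by linarith
    qed
    then have "d \<ge> 0" unfolding d_def by simp
    moreover have "x powr a \<le> c0" unfolding c0_def using True x a by (intro powr_mono2) auto
    ultimately show ?thesis by (simp add: mult_left_mono)
  next
    case False
    have "(W + V) * x \<ge> 2" using False V by (simp add: field_simps)
    then have "W - W\<^sup>2 * x / 2 \<le> V - V\<^sup>2 * x / 2"
    proof -
      have "(W - W\<^sup>2 * x / 2) - (V - V\<^sup>2 * x / 2) = (W - V) * (1 - (W + V) * x / 2)"
        by (simp add: field_simps power2_eq_square)
      moreover have "(W - V) * (1 - (W + V) * x / 2) \<le> 0"
        using \<open>(W + V) * x \<ge> 2\<close> V by (simp add: mult_nonneg_nonpos)
      ultimately show ?thesis by linarith
    qed
    then have "d \<le> 0" unfolding d_def by simp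
    moreover have "c0 \<le> x powr a" unfolding c0_def using False x a V by (intro powr_mono2) auto
    ultimately show ?thesis by (simp add: mult_left_mono_neg)
  qed
  have "lev x * (d * x powr a) \<le> lev x * (d * c0)"
    using key lev_pos[OF x] by (simp add: mult_left_mono)
  then show ?thesis unfolding ig_pos[OF W x] ig_pos[OF V(1) x] c0_def[symmetric]
    unfolding d_def by (simp add: algebra_simps)
qed

lemma mono_int:
  fixes W V a :: real
  assumes V: "0 < V" "V < W" and a: "0 \<le> a" "a \<le> 1"
  shows "integral {0<..} (\<lambda>x. ig_density (1/W) 1 x * x powr a) \<le> integral {0<..} (\<lambda>x. ig_density (1/V) 1 x * x powr a)"
proof -
  have W: "W > 0" using V by simp
  define c0 where "c0 = (2 / (W + V)) powr a"
  have iW: "(\<lambda>x. ig_density (1/W) 1 x * x powr a) integrable_on {0<..}" using abs_int_imp_int[OF part1(1)[OF W a]] .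
  have iV: "(\<lambda>x. ig_density (1/V) 1 x * x powr a) integrable_on {0<..}" using abs_int_imp_int[OF part1(1)[OF V(1) a]] .
  have nW: "ig_density (1/W) 1 integrable_on {0<..}" "integral {0<..} (ig_density (1/W) 1) = 1"
    using ig_norm(1)[OF W] abs_int_imp_int by auto
  have nV: "ig_density (1/V) 1 integrable_on {0<..}" "integral {0<..} (ig_density (1/V) 1) = 1"
    using ig_norm(1)[OF V(1)] abs_int_imp_int by auto
  have id: "(\<lambda>x. ig_density (1/W) 1 x - ig_density (1/V) 1 x) integrable_on {0<..}"
    using integrable_diff[OF nW(1) nV(1)] .
  have "integral {0<..} (\<lambda>x. ig_density (1/W) 1 x * x powr a) \<le>
     integral {0<..} (\<lambda>x. ig_density (1/V) 1 x * x powr a + c0 * (ig_density (1/W) 1 x - ig_density (1/V) 1 x))"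
    by (rule integral_le[OF iW]) (use integrable_add[OF iV integrable_on_mult_right[OF id]] mono_pt[OF V a(1)] c0_def in auto)
  also have "\<dots> = integral {0<..} (\<lambda>x. ig_density (1/V) 1 x * x powr a) + c0 * (integral {0<..} (ig_density (1/W) 1) - integral {0<..} (ig_density (1/V) 1))"
    by (simp add: integral_add[OF iV integrable_on_mult_right[OF id]] integral_mult_right integral_diff[OF nW(1) nV(1)])
  also have "\<dots> = integral {0<..} (\<lambda>x. ig_density (1/V) 1 x * x powr a)" using nW nV by simp
  finally show ?thesis .
qed

lemma levy_pt:
  fixes y a :: real
  assumes y: "y > 0"
  shows "\<bar>- 1 / (2 * y\<^sup>2)\<bar> * (lev (1 / (2 * y)) * (1 / (2 * y)) powr a) = 2 powr (- a) / sqrt pi * (y powr ((1/2 - a) - 1) / exp y)"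
proof -
  have y2: "2 * y > 0" using y by simp
  have l: "lev (1 / (2 * y)) = exp (- y) * (2 * y) * (2 * y) powr (1/2) / sqrt (2 * pi)"
    unfolding lev_def using y by (simp add: powr_half_sqrt real_sqrt_divide field_simps)
  have p: "(1 / (2 * y)) powr a = (2 * y) powr (- a)"
    using y by (simp add: powr_divide powr_minus_divide)
  have "\<bar>- 1 / (2 * y\<^sup>2)\<bar> * (lev (1 / (2 * y)) * (1 / (2 * y)) powr a)
      = exp (- y) / y * ((2 * y) powr (1/2) * (2 * y) powr (- a)) / sqrt (2 * pi)"
    unfolding l p using y by (simp add: field_simps power2_eq_square)
  also have "\<dots> = exp (- y) / y * (2 powr (1/2 - a) * y powr (1/2 - a)) / sqrt (2 * pi)"
  proof -
    have "(2 * y) powr (1/2) * (2 * y) powr (- a) = (2 * y) powr (1/2 - a)"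
      by (simp add: powr_add[symmetric])
    also have "\<dots> = 2 powr (1/2 - a) * y powr (1/2 - a)" using y by (simp add: powr_mult)
    finally show ?thesis by simp
  qed
  also have "\<dots> = 2 powr (- a) / sqrt pi * (y powr ((1/2 - a) - 1) / exp y)"
  proof -
    have a1: "y powr (1/2 - a) / y = y powr ((1/2 - a) - 1)" using y by (subst powr_diff) auto
    have a2: "2 powr (1/2 - a) / sqrt (2 * pi) = 2 powr (- a) / sqrt pi"
      by (simp add: powr_diff real_sqrt_mult powr_half_sqrt[symmetric] powr_minus_divide)
    have "exp (- y) / y * (2 powr (1/2 - a) * y powr (1/2 - a)) / sqrt (2 * pi)
       = (2 powr (1/2 - a) / sqrt (2 * pi)) * (y powr (1/2 - a) / y) * exp (- y)" by (simp add: mult_ac)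
    also have "\<dots> = 2 powr (- a) / sqrt pi * (y powr ((1/2 - a) - 1) / exp y)"
      unfolding a1 a2 by (simp only: exp_minus divide_inverse mult.assoc)
    finally show ?thesis .
  qed
  finally show ?thesis .
qed

lemma gamma_pos_int:
  fixes s :: real
  assumes s: "s > 0"
  shows "(\<lambda>t. t powr (s - 1) / exp t) absolutely_integrable_on {0<..} \<and> integral {0<..} (\<lambda>t. t powr (s - 1) / exp t) = Gamma s"
proof -
  have "((\<lambda>t. t powr (s - 1) / exp t) has_integral Gamma s) {0..}" by (rule Gamma_integral_real[OF s])
  hence "((\<lambda>t. if t \<in> {0<..} then t powr (s - 1) / exp t else 0) has_integral Gamma s) {0..}"
    by (rule has_integral_spike [of "{0}", rotated 2]) auto
  also have "?this = ((\<lambda>t. t powr (s - 1) / exp t) has_integral Gamma s) {0<..}"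
    by (subst has_integral_restrict) auto
  finally have h: "((\<lambda>t. t powr (s - 1) / exp t) has_integral Gamma s) {0<..}" .
  have "(\<lambda>t. t powr (s - 1) / exp t) absolutely_integrable_on {0<..}"
    using h by (subst absolutely_integrable_on_iff_nonneg) (auto simp: has_integral_integrable)
  then show ?thesis using h by (simp add: integral_unique)
qed

lemma levy_int:
  fixes a :: real
  assumes a: "0 \<le> a" "a < 1/2"
  shows "(\<lambda>x. lev x * x powr a) absolutely_integrable_on {0<..} \<and> integral {0<..} (\<lambda>x. lev x * x powr a) = C_const a"
proof -
  define K where "K = 2 powr (- a) / sqrt pi"
  define g where "g y = 1 / (2 * y)" for y :: real
  define g' where "g' y = - 1 / (2 * y\<^sup>2)" for y :: real
  have der: "(g has_field_derivative g' y) (at y within {0<..})" if "y \<in> {0<..}" for y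
  proof -
    have y: "y > 0" using that by simp
    have d1: "((\<lambda>y. 2 * y) has_field_derivative 2 * 1) (at y)"
      by (intro DERIV_cmult DERIV_ident)
    have "((\<lambda>y. inverse (2 * y)) has_field_derivative - (2 * 1 * inverse ((2 * y) ^ Suc (Suc 0)))) (at y)"
      using DERIV_inverse_fun[OF d1] y by simp
    moreover have "- (2 * 1 * inverse ((2 * y) ^ Suc (Suc 0))) = g' y"
      unfolding g'_def using y by (simp add: field_simps power2_eq_square)
    ultimately have "(g has_field_derivative g' y) (at y)"
      unfolding g_def by (simp add: inverse_eq_divide)
    then show ?thesis by (rule has_field_derivative_at_within)
  qed
  have inj: "inj_on g {0<..}"
    unfolding inj_on_def g_def by (auto simp: field_simps)
  have img: "g ` {0<..} = {0<..}"
  proof (intro set_eqI iffI)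
    fix x :: real assume "x \<in> g ` {0<..}" then show "x \<in> {0<..}" unfolding g_def by auto
  next
    fix x :: real assume x: "x \<in> {0<..}"
    then have "g (1 / (2 * x)) = x" unfolding g_def by simp
    moreover have "1 / (2 * x) \<in> {0<..}" using x by simp
    ultimately show "x \<in> g ` {0<..}" by (metis image_eqI)
  qed
  have L: "{0::real<..} \<in> sets lebesgue" by simp
  note cv = has_absolute_integral_change_of_variables_1'[of "{0<..}" g g' "\<lambda>x. lev x * x powr a" "C_const a", OF L der inj]
  have eqp: "K * ((y powr ((1/2 - a) - 1)) / exp y) = \<bar>g' y\<bar> * (lev (g y) * (g y) powr a)" if "y \<in> {0<..}" for y
    unfolding g_def g'_def K_def using levy_pt[of y a] that by simp
  have ga: "(\<lambda>t. t powr ((1/2 - a) - 1) / exp t) absolutely_integrable_on {0<..} \<and> integral {0<..} (\<lambda>t. t powr ((1/2 - a) - 1) / exp t) = Gamma (1/2 - a)"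
    using gamma_pos_int[of "1/2 - a"] a by simp
  have k: "(\<lambda>y. K * ((y powr ((1/2 - a) - 1)) / exp y)) absolutely_integrable_on {0<..} \<and> integral {0<..} (\<lambda>y. K * ((y powr ((1/2 - a) - 1)) / exp y)) = C_const a"
  proof
    show "(\<lambda>y. K * ((y powr ((1/2 - a) - 1)) / exp y)) absolutely_integrable_on {0<..}"
      using ga by (intro set_integrable_mult_right) auto
    show "integral {0<..} (\<lambda>y. K * ((y powr ((1/2 - a) - 1)) / exp y)) = C_const a"
      unfolding integral_mult_right using ga unfolding K_def C_const_def by simp
  qed
  have c: "(\<lambda>y. \<bar>g' y\<bar> * (lev (g y) * (g y) powr a)) absolutely_integrable_on {0<..} \<and>
      integral {0<..} (\<lambda>y. \<bar>g' y\<bar> * (lev (g y) * (g y) powr a)) = C_const a"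
    using iffD1[OF abs_int_cong[OF eqp] k] .
  show ?thesis using iffD1[OF cv c] unfolding img .
qed

lemma lim_int:
  fixes a :: real
  assumes a: "0 \<le> a" "a < 1/2"
  shows "((\<lambda>W. integral {0<..} (\<lambda>x. ig_density (1/W) 1 x * x powr a)) \<longlongrightarrow> C_const a) (at_right 0)"
proof (rule tendsto_at_right_sequentially[of 0 1])
  show "(0::real) < 1" by simp
  fix S :: "nat \<Rightarrow> real"
  assume S0: "\<And>n. 0 < S n" and S1: "\<And>n. S n < 1" and "decseq S" and St: "S \<longlonglongrightarrow> 0"
  have a1: "a \<le> 1" using a by simp
  note lv = levy_int[OF a]
  have "(\<lambda>k. integral {0<..} (\<lambda>x. ig_density (1 / S k) 1 x * x powr a)) \<longlonglongrightarrow> integral {0<..} (\<lambda>x. lev x * x powr a)"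
  proof (rule dominated_convergence(2)[where h = "\<lambda>x. exp 1 * (lev x * x powr a)"])
    fix k
    show "(\<lambda>x. ig_density (1 / S k) 1 x * x powr a) integrable_on {0<..}"
      using abs_int_imp_int[OF part1(1)[OF S0 a(1) a1]] .
  next
    show "(\<lambda>x. exp 1 * (lev x * x powr a)) integrable_on {0<..}"
      using lv abs_int_imp_int integrable_on_mult_right by blast
  next
    fix k and x :: real assume "x \<in> {0<..}"
    then have x: "x > 0" by simp
    have "S k - (S k)\<^sup>2 * x / 2 \<le> 1" using S1[of k] x by (smt (verit) divide_nonneg_nonneg mult_nonneg_nonneg zero_le_power2)
    then have "exp (S k - (S k)\<^sup>2 * x / 2) \<le> exp 1" by simp
    then have "exp (S k - (S k)\<^sup>2 * x / 2) * (lev x * x powr a) \<le> exp 1 * (lev x * x powr a)"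
      using lev_pos[OF x] by (intro mult_right_mono) auto
    then show "norm (ig_density (1 / S k) 1 x * x powr a) \<le> exp 1 * (lev x * x powr a)"
      using ig_pos[OF S0 x] ig_nonneg lev_pos[OF x] by (simp add: mult.assoc)
  next
    fix x :: real assume "x \<in> {0<..}"
    then have x: "x > 0" by simp
    have "(\<lambda>k. exp (S k - (S k)\<^sup>2 * x / 2) * lev x * x powr a) \<longlonglongrightarrow> exp (0 - 0\<^sup>2 * x / 2) * lev x * x powr a"
      by (intro tendsto_intros St) auto
    then show "(\<lambda>k. ig_density (1 / S k) 1 x * x powr a) \<longlonglongrightarrow> lev x * x powr a"
      using ig_pos[OF S0 x] by simp
  qed
  then show "(\<lambda>n. integral {0<..} (\<lambda>x. ig_density (1 / S n) 1 x * x powr a)) \<longlonglongrightarrow> C_const a"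
    using lv by simp
qed

lemma powr_meas[measurable]: "(\<lambda>x::real. x powr a) \<in> borel_measurable borel"
  by measurable

lemma IG_eq:
  fixes W a :: real
  assumes W: "W > 0" and a: "0 \<le> a" "a \<le> 1"
  shows "integrable (IG (1 / W) 1) (\<lambda>x. x powr a)"
    "(\<integral>x. x powr a \<partial>IG (1 / W) 1) = integral {0<..} (\<lambda>x. ig_density (1/W) 1 x * x powr a)"
  using IG_conv[OF W powr_meas part1(1)[OF W a]] by auto

theorem lemmaA2:
  shows "(\<forall>W::real. \<forall>\<alpha>::real. W > 0 \<and> 0 \<le> \<alpha> \<and> \<alpha> \<le> 1 \<longrightarrow>
            integrable (IG (1 / W) 1) (\<lambda>x. x powr \<alpha>) \<and>
            (\<integral>x. x powr \<alpha> \<partial>IG (1 / W) 1) \<le> W powr (- \<alpha>))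
       \<and> (\<forall>\<alpha>::real. 0 \<le> \<alpha> \<and> \<alpha> < 1/2 \<longrightarrow>
            (\<forall>W::real. W > 0 \<longrightarrow> (\<integral>x. x powr \<alpha> \<partial>IG (1 / W) 1) \<le> C_const \<alpha>) \<and>
            ((\<lambda>W. \<integral>x. x powr \<alpha> \<partial>IG (1 / W) 1) \<longlongrightarrow> C_const \<alpha>) (at_right 0))"
proof (intro conjI allI impI)
  fix W a :: real
  assume h: "0 < W \<and> 0 \<le> a \<and> a \<le> 1"
  then have W: "W > 0" and a: "0 \<le> a" "a \<le> 1" by auto
  show "integrable (IG (1 / W) 1) (\<lambda>x. x powr a)" using IG_eq(1)[OF W a] .
  show "(\<integral>x. x powr a \<partial>IG (1 / W) 1) \<le> W powr (- a)"
    unfolding IG_eq(2)[OF W a] using part1(2)[OF W a] .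
next
  fix a :: real
  assume h: "0 \<le> a \<and> a < 1/2"
  then have a: "0 \<le> a" "a < 1/2" and a1: "0 \<le> a" "a \<le> 1" by auto
  note L = lim_int[OF a]
  {
    fix W :: real assume W: "W > 0"
    show "(\<integral>x. x powr a \<partial>IG (1 / W) 1) \<le> C_const a"
      unfolding IG_eq(2)[OF W a1]
    proof (rule tendsto_lowerbound[OF L])
      show "\<forall>\<^sub>F V in at_right 0. integral {0<..} (\<lambda>x. ig_density (1 / W) 1 x * x powr a)
          \<le> integral {0<..} (\<lambda>x. ig_density (1 / V) 1 x * x powr a)"
        by (rule eventually_at_rightI[of 0 W]) (use W mono_int[OF _ _ a1] in auto)
    qed simp
  }
  have "\<forall>\<^sub>F W in at_right 0. integral {0<..} (\<lambda>x. ig_density (1 / W) 1 x * x powr a) = (\<integral>x. x powr a \<partial>IG (1 / W) 1)"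
    using eventually_at_right_less[of "0::real"] by eventually_elim (use IG_eq(2) a1 in auto)
  then show "((\<lambda>W. \<integral>x. x powr a \<partial>IG (1 / W) 1) \<longlongrightarrow> C_const a) (at_right 0)"
    using tendsto_cong L by fastforce
qed

end
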